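(* Let $(M,g)$ be an $n$-dimensional Riemannian manifold with $n\geq 3$, let $V$ be a non-vanishing vector field on $M$ and $\lambda$ a smooth function on $M$ such that $$\frac{1}{2}\pounds_V g+\operatorname{Ric}=\left(\frac{\operatorname{scal}}{2}+\lambda\right)g .$$ Assume $V$ is torse-forming, i.e. $\nabla_X V=aX+\psi(X)V$ for all vector fields $X$, where $a$ is a smooth function and $\psi$ a $1$-form on $M$, and assume $\psi$ is a Codazzi tensor field, i.e. $(\nabla_X\psi)Y=(\nabla_Y\psi)X$ for all vector fields $X,Y$. Then $$\lambda=a+\frac{(n-1)(n-2)}{2|V|^2}V(a)-\frac{1}{2|V|^2}\big[(n-1)(n-2)a+(n-3)|V|^2\big]\psi(V).$$ Moreover, if $V$ is concircular, i.e. $\nabla_X V=aX$ for all $X$, with $a$ a non-zero constant, then (i) $\lambda=a$; and (ii) $M$ is Ricci-flat, i.e. $\operatorname{Ric}=0$.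
   Context: $\pounds_V$ is the Lie derivative in the direction of $V$, $\nabla$ the Levi-Civita connection, $\operatorname{Ric}$ the Ricci tensor and $\operatorname{scal}$ the scalar curvature of $g$. A pair $(V,\lambda)$ satisfying the displayed equation is called an almost Einstein soliton. *)

theory Defs
  imports "HOL-Analysis.Analysis"
begin

text \<open>Local-coordinate rendering of Riemannian geometry on an open set U of R^n
  (one coordinate chart). Vectors/covectors are component vectors in real^'n,
  the metric is the matrix of components g_ij.\<close>

definition pd :: "'n::finite \<Rightarrow> (real^'n \<Rightarrow> real) \<Rightarrow> real^'n \<Rightarrow> real" where
  "pd i f x = frechet_derivative f (at x) (axis i 1)"

fun pdl :: "'n::finite list \<Rightarrow> (real^'n \<Rightarrow> real) \<Rightarrow> real^'n \<Rightarrow> real" where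
  "pdl [] f = f"
| "pdl (i # is) f = pd i (pdl is f)"

definition smooth_on :: "(real^'n::finite) set \<Rightarrow> (real^'n \<Rightarrow> real) \<Rightarrow> bool" where
  "smooth_on U f \<longleftrightarrow> (\<forall>is. pdl is f differentiable_on U)"

definition riemannian_metric :: "(real^'n::finite) set \<Rightarrow> (real^'n \<Rightarrow> real^'n^'n) \<Rightarrow> bool" where
  "riemannian_metric U g \<longleftrightarrow> open U
     \<and> (\<forall>i j. smooth_on U (\<lambda>x. g x $ i $ j))
     \<and> (\<forall>x\<in>U. \<forall>i j. g x $ i $ j = g x $ j $ i)
     \<and> (\<forall>x\<in>U. \<forall>v::real^'n. v \<noteq> 0 \<longrightarrow> (\<Sum>i\<in>UNIV. \<Sum>j\<in>UNIV. g x $ i $ j * v $ i * v $ j) > 0)"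

definition ginv :: "(real^'n::finite \<Rightarrow> real^'n^'n) \<Rightarrow> real^'n \<Rightarrow> real^'n^'n" where
  "ginv g x = matrix_inv (g x)"

definition christoffel :: "(real^'n::finite \<Rightarrow> real^'n^'n) \<Rightarrow> 'n \<Rightarrow> 'n \<Rightarrow> 'n \<Rightarrow> real^'n \<Rightarrow> real" where
  "christoffel g k i j x = (1/2) * (\<Sum>l\<in>UNIV. ginv g x $ k $ l *
      (pd i (\<lambda>y. g y $ j $ l) x + pd j (\<lambda>y. g y $ i $ l) x - pd l (\<lambda>y. g y $ i $ j) x))"

definition ricci :: "(real^'n::finite \<Rightarrow> real^'n^'n) \<Rightarrow> 'n \<Rightarrow> 'n \<Rightarrow> real^'n \<Rightarrow> real" where
  "ricci g i j x = (\<Sum>k\<in>UNIV. pd k (christoffel g k i j) x)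
      - (\<Sum>k\<in>UNIV. pd j (christoffel g k i k) x)
      + (\<Sum>k\<in>UNIV. \<Sum>p\<in>UNIV. christoffel g k k p x * christoffel g p i j x
                              - christoffel g k j p x * christoffel g p i k x)"

definition scal :: "(real^'n::finite \<Rightarrow> real^'n^'n) \<Rightarrow> real^'n \<Rightarrow> real" where
  "scal g x = (\<Sum>i\<in>UNIV. \<Sum>j\<in>UNIV. ginv g x $ i $ j * ricci g i j x)"

definition lie_g :: "(real^'n::finite \<Rightarrow> real^'n) \<Rightarrow> (real^'n \<Rightarrow> real^'n^'n) \<Rightarrow> 'n \<Rightarrow> 'n \<Rightarrow> real^'n \<Rightarrow> real" where
  "lie_g V g i j x = (\<Sum>k\<in>UNIV. V x $ k * pd k (\<lambda>y. g y $ i $ j) x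
      + g x $ k $ j * pd i (\<lambda>y. V y $ k) x + g x $ i $ k * pd j (\<lambda>y. V y $ k) x)"

definition cov_vec :: "(real^'n::finite \<Rightarrow> real^'n^'n) \<Rightarrow> (real^'n \<Rightarrow> real^'n) \<Rightarrow> 'n \<Rightarrow> 'n \<Rightarrow> real^'n \<Rightarrow> real" where
  "cov_vec g V i k x = pd i (\<lambda>y. V y $ k) x + (\<Sum>j\<in>UNIV. christoffel g k i j x * V x $ j)"

definition cov_form :: "(real^'n::finite \<Rightarrow> real^'n^'n) \<Rightarrow> (real^'n \<Rightarrow> real^'n) \<Rightarrow> 'n \<Rightarrow> 'n \<Rightarrow> real^'n \<Rightarrow> real" where
  "cov_form g \<psi> i j x = pd i (\<lambda>y. \<psi> y $ j) x - (\<Sum>k\<in>UNIV. christoffel g k i j x * \<psi> x $ k)"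

definition sqnorm :: "(real^'n::finite \<Rightarrow> real^'n^'n) \<Rightarrow> (real^'n \<Rightarrow> real^'n) \<Rightarrow> real^'n \<Rightarrow> real" where
  "sqnorm g V x = (\<Sum>i\<in>UNIV. \<Sum>j\<in>UNIV. g x $ i $ j * V x $ i * V x $ j)"

definition smooth_field :: "(real^'n::finite) set \<Rightarrow> (real^'n \<Rightarrow> real^'n) \<Rightarrow> bool" where
  "smooth_field U V \<longleftrightarrow> (\<forall>k. smooth_on U (\<lambda>x. V x $ k))"

definition almost_einstein_soliton ::
  "(real^'n::finite) set \<Rightarrow> (real^'n \<Rightarrow> real^'n^'n) \<Rightarrow> (real^'n \<Rightarrow> real^'n) \<Rightarrow> (real^'n \<Rightarrow> real) \<Rightarrow> bool" where
  "almost_einstein_soliton U g V lam \<longleftrightarrow> smooth_field U V \<and> smooth_on U lam \<and>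
     (\<forall>x\<in>U. \<forall>i j. (1/2) * lie_g V g i j x + ricci g i j x = (scal g x / 2 + lam x) * g x $ i $ j)"

definition torse_forming ::
  "(real^'n::finite) set \<Rightarrow> (real^'n \<Rightarrow> real^'n^'n) \<Rightarrow> (real^'n \<Rightarrow> real^'n) \<Rightarrow> (real^'n \<Rightarrow> real) \<Rightarrow> (real^'n \<Rightarrow> real^'n) \<Rightarrow> bool" where
  "torse_forming U g V a \<psi> \<longleftrightarrow> smooth_on U a \<and> smooth_field U \<psi> \<and>
     (\<forall>x\<in>U. \<forall>i k. cov_vec g V i k x = a x * (if i = k then 1 else 0) + \<psi> x $ i * V x $ k)"

definition codazzi :: "(real^'n::finite) set \<Rightarrow> (real^'n \<Rightarrow> real^'n^'n) \<Rightarrow> (real^'n \<Rightarrow> real^'n) \<Rightarrow> bool" where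
  "codazzi U g \<psi> \<longleftrightarrow> (\<forall>x\<in>U. \<forall>i j. cov_form g \<psi> i j x = cov_form g \<psi> j i x)"

definition concircular ::
  "(real^'n::finite) set \<Rightarrow> (real^'n \<Rightarrow> real^'n^'n) \<Rightarrow> (real^'n \<Rightarrow> real^'n) \<Rightarrow> (real^'n \<Rightarrow> real) \<Rightarrow> bool" where
  "concircular U g V a \<longleftrightarrow> smooth_on U a \<and>
     (\<forall>x\<in>U. \<forall>i k. cov_vec g V i k x = a x * (if i = k then 1 else 0))"

definition dir_deriv :: "(real^'n::finite \<Rightarrow> real^'n) \<Rightarrow> (real^'n \<Rightarrow> real) \<Rightarrow> real^'n \<Rightarrow> real" where
  "dir_deriv V f x = (\<Sum>i\<in>UNIV. V x $ i * pd i f x)"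

definition pair_form :: "(real^'n::finite \<Rightarrow> real^'n) \<Rightarrow> (real^'n \<Rightarrow> real^'n) \<Rightarrow> real^'n \<Rightarrow> real" where
  "pair_form \<psi> V x = (\<Sum>i\<in>UNIV. \<psi> x $ i * V x $ i)"

end

theory Submission
  imports Defs
begin


lemma pd_at: "(f has_derivative f') (at x) \<Longrightarrow> pd i f x = f' (axis i 1)"
  unfolding pd_def using frechet_derivative_at by metis

lemma pd_works: "f differentiable at x \<Longrightarrow> (f has_derivative frechet_derivative f (at x)) (at x)"
  using frechet_derivative_works by blast

lemma pd_const[simp]: "pd i (\<lambda>y. c) x = 0"
  unfolding pd_def by simp

lemma pd_add: "f differentiable at x \<Longrightarrow> h differentiable at x \<Longrightarrow>
   pd i (\<lambda>y. f y + h y) x = pd i f x + pd i h x"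
  by (subst pd_at[OF has_derivative_add[OF pd_works pd_works]]) (auto simp: pd_def)

lemma pd_diff: "f differentiable at x \<Longrightarrow> h differentiable at x \<Longrightarrow>
   pd i (\<lambda>y. f y - h y) x = pd i f x - pd i h x"
  by (subst pd_at[OF has_derivative_diff[OF pd_works pd_works]]) (auto simp: pd_def)

lemma pd_mult: "f differentiable at x \<Longrightarrow> h differentiable at x \<Longrightarrow>
   pd i (\<lambda>y. f y * h y) x = f x * pd i h x + pd i f x * h x"
  by (subst pd_at[OF has_derivative_mult[OF pd_works pd_works]]) (auto simp: pd_def)

lemma pd_sum: "finite S \<Longrightarrow> (\<And>s. s \<in> S \<Longrightarrow> f s differentiable at x) \<Longrightarrow>
   pd i (\<lambda>y. \<Sum>s\<in>S. f s y) x = (\<Sum>s\<in>S. pd i (f s) x)"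
  by (subst pd_at[OF has_derivative_sum[OF pd_works]]) (auto simp: pd_def)

lemma pd_local: "open U \<Longrightarrow> x \<in> U \<Longrightarrow> (\<And>y. y \<in> U \<Longrightarrow> f y = h y) \<Longrightarrow> pd i f x = pd i h x"
proof -
  assume U: "open U" "x \<in> U" and eq: "\<And>y. y \<in> U \<Longrightarrow> f y = h y"
  have "\<And>f'. (f has_derivative f') (at x) \<longleftrightarrow> (h has_derivative f') (at x)"
    using U eq by (metis has_derivative_transform_within_open)
  then show ?thesis unfolding pd_def frechet_derivative_def by simp
qed

lemma diff_local: "open U \<Longrightarrow> x \<in> U \<Longrightarrow> (\<And>y. y \<in> U \<Longrightarrow> f y = h y) \<Longrightarrow> f differentiable at x \<Longrightarrow> h differentiable at x"
  unfolding differentiable_def by (metis has_derivative_transform_within_open)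

lemma smooth_diff: "smooth_on U f \<Longrightarrow> open U \<Longrightarrow> x \<in> U \<Longrightarrow> pdl is f differentiable at x"
  unfolding smooth_on_def using differentiable_on_eq_differentiable_at by blast

lemma pd_line:
  assumes "f differentiable at (p + s *\<^sub>R axis i 1)"
  shows "((\<lambda>s. f (p + s *\<^sub>R axis i 1)) has_real_derivative pd i f (p + s *\<^sub>R axis i 1)) (at s)"
proof -
  let ?F = "frechet_derivative f (at (p + s *\<^sub>R axis i 1))"
  have l: "linear ?F" using assms linear_frechet_derivative by blast
  have "((\<lambda>s. p + s *\<^sub>R axis i 1) has_derivative (\<lambda>h. h *\<^sub>R axis i 1)) (at s)"
    by (auto intro!: derivative_eq_intros)
  from diff_chain_at[OF this pd_works[OF assms]]
  have "((\<lambda>s. f (p + s *\<^sub>R axis i 1)) has_derivative (\<lambda>h. ?F (h *\<^sub>R axis i 1))) (at s)"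
    by (simp add: o_def)
  moreover have "(\<lambda>h. ?F (h *\<^sub>R axis i 1)) = (\<lambda>h. pd i f (p + s *\<^sub>R axis i 1) * h)"
    using l by (auto simp: pd_def linear_cmul)
  ultimately show ?thesis by (simp add: has_field_derivative_def)
qed



lemma mixed_step:
  fixes f :: "real^'n::finite \<Rightarrow> real"
  assumes U: "open U" and ball: "ball x d \<subseteq> U" and h: "0 < h" "2 * h < d"
    and df: "\<forall>y\<in>U. f differentiable at y" and dfi: "\<forall>y\<in>U. pd i f differentiable at y"
  shows "\<exists>p. dist p x < d \<and>
     f (x + h *\<^sub>R axis i 1 + h *\<^sub>R axis j 1) - f (x + h *\<^sub>R axis i 1) - f (x + h *\<^sub>R axis j 1) + f x
       = h * h * pd j (pd i f) p"
proof -
  let ?ei = "axis i 1 :: real^'n" and ?ej = "axis j 1 :: real^'n"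
  have inU: "x + s *\<^sub>R ?ei + t *\<^sub>R ?ej \<in> U" if "0 \<le> s" "s \<le> h" "0 \<le> t" "t \<le> h" for s t
  proof -
    have "norm (s *\<^sub>R ?ei + t *\<^sub>R ?ej) \<le> norm (s *\<^sub>R ?ei) + norm (t *\<^sub>R ?ej)" by (rule norm_triangle_ineq)
    also have "\<dots> \<le> 2 * h" using that by simp
    finally have "dist (x + s *\<^sub>R ?ei + t *\<^sub>R ?ej) x < d" using h by (simp add: dist_norm add.assoc)
    then show ?thesis using ball by (auto simp: dist_commute)
  qed
  have dist_lt: "dist (x + s *\<^sub>R ?ei + t *\<^sub>R ?ej) x < d" if "0 \<le> s" "s \<le> h" "0 \<le> t" "t \<le> h" for s t
  proof -
    have "norm (s *\<^sub>R ?ei + t *\<^sub>R ?ej) \<le> norm (s *\<^sub>R ?ei) + norm (t *\<^sub>R ?ej)" by (rule norm_triangle_ineq)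
    also have "\<dots> \<le> 2 * h" using that by simp
    finally show ?thesis using h by (simp add: dist_norm add.assoc)
  qed
  define G where "G s = f (x + h *\<^sub>R ?ej + s *\<^sub>R ?ei) - f (x + s *\<^sub>R ?ei)" for s
  have "DERIV G s :> pd i f (x + h *\<^sub>R ?ej + s *\<^sub>R ?ei) - pd i f (x + s *\<^sub>R ?ei)"
    if "0 \<le> s" "s \<le> h" for s
  proof -
    have "x + h *\<^sub>R ?ej + s *\<^sub>R ?ei \<in> U" using inU[of s h] that h by (simp add: algebra_simps)
    moreover have "x + s *\<^sub>R ?ei \<in> U" using inU[of s 0] that h by simp
    ultimately show ?thesis unfolding G_def using df
      by (intro DERIV_diff pd_line) auto
  qed
  from MVT2[OF h(1) this] obtain \<xi> where xi: "0 < \<xi>" "\<xi> < h"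
    and G: "G h - G 0 = (h - 0) * (pd i f (x + h *\<^sub>R ?ej + \<xi> *\<^sub>R ?ei) - pd i f (x + \<xi> *\<^sub>R ?ei))"
    by blast
  define H where "H t = pd i f (x + \<xi> *\<^sub>R ?ei + t *\<^sub>R ?ej)" for t
  have "DERIV H t :> pd j (pd i f) (x + \<xi> *\<^sub>R ?ei + t *\<^sub>R ?ej)" if "0 \<le> t" "t \<le> h" for t
    unfolding H_def using dfi inU[of \<xi> t] that xi by (intro pd_line) auto
  from MVT2[OF h(1) this] obtain \<eta> where eta: "0 < \<eta>" "\<eta> < h"
    and H: "H h - H 0 = (h - 0) * pd j (pd i f) (x + \<xi> *\<^sub>R ?ei + \<eta> *\<^sub>R ?ej)"
    by blast
  show ?thesis
  proof (intro exI conjI)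
    show "dist (x + \<xi> *\<^sub>R ?ei + \<eta> *\<^sub>R ?ej) x < d" using dist_lt xi eta by simp
    have "H h - H 0 = pd i f (x + h *\<^sub>R ?ej + \<xi> *\<^sub>R ?ei) - pd i f (x + \<xi> *\<^sub>R ?ei)"
      unfolding H_def by (simp add: algebra_simps)
    then have "G h - G 0 = h * (h * pd j (pd i f) (x + \<xi> *\<^sub>R ?ei + \<eta> *\<^sub>R ?ej))"
      using G H by simp
    then show "f (x + h *\<^sub>R ?ei + h *\<^sub>R ?ej) - f (x + h *\<^sub>R ?ei) - f (x + h *\<^sub>R ?ej) + f x
       = h * h * pd j (pd i f) (x + \<xi> *\<^sub>R ?ei + \<eta> *\<^sub>R ?ej)"
      unfolding G_def by (simp add: algebra_simps)
  qed
qed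

lemma mixed_partials:
  fixes f :: "real^'n::finite \<Rightarrow> real"
  assumes U: "open U" "x \<in> U"
    and df: "\<forall>y\<in>U. f differentiable at y" and dfi: "\<forall>y\<in>U. pd i f differentiable at y"
    and dfj: "\<forall>y\<in>U. pd j f differentiable at y"
    and c1: "isCont (pd j (pd i f)) x" and c2: "isCont (pd i (pd j f)) x"
  shows "pd j (pd i f) x = pd i (pd j f) x"
proof (rule ccontr)
  let ?D1 = "pd j (pd i f) x" and ?D2 = "pd i (pd j f) x"
  assume ne: "?D1 \<noteq> ?D2"
  define e where "e = \<bar>?D1 - ?D2\<bar> / 2"
  have e: "e > 0" using ne by (simp add: e_def)
  obtain r where r: "r > 0" "ball x r \<subseteq> U" using U open_contains_ball by blast
  obtain d1 where d1: "d1 > 0" "\<forall>y. dist y x < d1 \<longrightarrow> dist (pd j (pd i f) y) ?D1 < e"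
    using c1 e unfolding continuous_at_eps_delta by blast
  obtain d2 where d2: "d2 > 0" "\<forall>y. dist y x < d2 \<longrightarrow> dist (pd i (pd j f) y) ?D2 < e"
    using c2 e unfolding continuous_at_eps_delta by blast
  define d where "d = min r (min d1 d2)"
  have d: "d > 0" "ball x d \<subseteq> U" using r d1 d2 by (auto simp: d_def)
  define h where "h = d / 3"
  have h: "0 < h" "2 * h < d" using d by (auto simp: h_def)
  obtain p1 where p1: "dist p1 x < d"
    "f (x + h *\<^sub>R axis i 1 + h *\<^sub>R axis j 1) - f (x + h *\<^sub>R axis i 1) - f (x + h *\<^sub>R axis j 1) + f x
       = h * h * pd j (pd i f) p1"
    using mixed_step[OF U(1) d(2) h df dfi] by blast
  obtain p2 where p2: "dist p2 x < d"
    "f (x + h *\<^sub>R axis j 1 + h *\<^sub>R axis i 1) - f (x + h *\<^sub>R axis j 1) - f (x + h *\<^sub>R axis i 1) + f x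
       = h * h * pd i (pd j f) p2"
    using mixed_step[OF U(1) d(2) h df dfj] by blast
  have "h * h * pd j (pd i f) p1 = h * h * pd i (pd j f) p2"
    using p1(2) p2(2) by (simp add: algebra_simps)
  then have eq: "pd j (pd i f) p1 = pd i (pd j f) p2" using h by simp
  have "dist (pd j (pd i f) p1) ?D1 < e" using d1 p1 by (auto simp: d_def)
  moreover have "dist (pd i (pd j f) p2) ?D2 < e" using d2 p2 by (auto simp: d_def)
  ultimately have "\<bar>pd i (pd j f) p2 - ?D1\<bar> < e" "\<bar>pd i (pd j f) p2 - ?D2\<bar> < e"
    using eq by (simp_all add: dist_real_def)
  then show False unfolding e_def by (simp add: abs_if split: if_splits)

qed



lemma differentiable_prod_at:
  fixes f :: "'i \<Rightarrow> real^'n::finite \<Rightarrow> real"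
  shows "(\<And>i. i \<in> I \<Longrightarrow> f i differentiable at x) \<Longrightarrow> (\<lambda>y. \<Prod>i\<in>I. f i y) differentiable at x"
proof -
  assume "\<And>i. i \<in> I \<Longrightarrow> f i differentiable at x"
  then have "\<forall>i\<in>I. \<exists>D. (f i has_derivative D) (at x)" by (auto simp: differentiable_def)
  then obtain D where "\<forall>i\<in>I. (f i has_derivative D i) (at x)" by metis
  then show ?thesis unfolding differentiable_def by (blast intro: has_derivative_prod)
qed

lemma det_differentiable:
  fixes F :: "real^'n::finite \<Rightarrow> real^'n^'n"
  assumes "\<And>i j. (\<lambda>y. F y $ i $ j) differentiable at x"
  shows "(\<lambda>y. det (F y)) differentiable at x"
  unfolding det_def
  by (intro differentiable_sum ballI differentiable_mult differentiable_const differentiable_prod_at assms)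
     (simp add: finite_permutations)

lemma metric_invertible:
  assumes "riemannian_metric U g" "y \<in> U"
  shows "invertible (g y)"
proof -
  have "\<forall>v. g y *v v = 0 \<longrightarrow> v = 0"
  proof (intro allI impI)
    fix v assume v: "g y *v v = 0"
    have "(\<Sum>i\<in>UNIV. \<Sum>j\<in>UNIV. g y $ i $ j * v $ i * v $ j) = (\<Sum>i\<in>UNIV. v $ i * (g y *v v) $ i)"
      by (simp add: matrix_vector_mult_def sum_distrib_left mult_ac)
    also have "\<dots> = 0" using v by simp
    finally show "v = 0" using assms unfolding riemannian_metric_def by force
  qed
  then obtain B where "B ** g y = mat 1" using matrix_left_invertible_ker by blast
  then show ?thesis unfolding invertible_def using matrix_left_right_inverse by blast
qed

lemma ginv_props:
  assumes "riemannian_metric U g" "y \<in> U"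
  shows "g y ** ginv g y = mat 1" "ginv g y ** g y = mat 1"
proof -
  have "\<exists>A'. g y ** A' = mat 1 \<and> A' ** g y = mat 1"
    using metric_invertible[OF assms] unfolding invertible_def by blast
  then have "g y ** ginv g y = mat 1 \<and> ginv g y ** g y = mat 1"
    unfolding ginv_def matrix_inv_def by (rule someI_ex)
  then show "g y ** ginv g y = mat 1" "ginv g y ** g y = mat 1" by auto
qed

lemma ginv_sum1: 
  assumes "riemannian_metric U g" "y \<in> U"
  shows "(\<Sum>k\<in>UNIV. g y $ i $ k * ginv g y $ k $ l) = (if i = l then 1 else 0)"
    "(\<Sum>k\<in>UNIV. ginv g y $ i $ k * g y $ k $ l) = (if i = l then 1 else 0)"
proof -
  have "(g y ** ginv g y) $ i $ l = (mat 1 :: real^'a^'a) $ i $ l" using ginv_props[OF assms] by simp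
  then show "(\<Sum>k\<in>UNIV. g y $ i $ k * ginv g y $ k $ l) = (if i = l then 1 else 0)"
    by (simp add: matrix_matrix_mult_def mat_def)
  have "(ginv g y ** g y) $ i $ l = (mat 1 :: real^'a^'a) $ i $ l" using ginv_props[OF assms] by simp
  then show "(\<Sum>k\<in>UNIV. ginv g y $ i $ k * g y $ k $ l) = (if i = l then 1 else 0)"
    by (simp add: matrix_matrix_mult_def mat_def)
qed

lemma ginv_cramer:
  assumes "riemannian_metric U g" "y \<in> U"
  shows "ginv g y $ k $ l = det (\<chi> i j. if j = k then axis l 1 $ i else g y $ i $ j) / det (g y)"
proof -
  have d: "det (g y) \<noteq> 0" using metric_invertible[OF assms] invertible_det_nz by blast
  have "g y *v (ginv g y *v axis l 1) = axis l 1"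
    by (simp add: matrix_vector_mul_assoc ginv_props[OF assms])
  then have "ginv g y *v axis l 1 = (\<chi> k. det (\<chi> i j. if j = k then axis l 1 $ i else g y $ i $ j) / det (g y))"
    using cramer[OF d] by blast
  then have "(ginv g y *v axis l 1) $ k = det (\<chi> i j. if j = k then axis l 1 $ i else g y $ i $ j) / det (g y)"
    by simp
  then show ?thesis by (simp add: matrix_vector_mult_basis column_def)
qed

lemma metric_entry_diff:
  assumes "riemannian_metric U g" "x \<in> U"
  shows "pdl is (\<lambda>y. g y $ i $ j) differentiable at x"
  using assms smooth_diff unfolding riemannian_metric_def by blast

lemma ginv_diff:
  assumes m: "riemannian_metric U g" and x: "x \<in> U"
  shows "(\<lambda>y. ginv g y $ k $ l) differentiable at x"
proof -
  have U: "open U" using m unfolding riemannian_metric_def by blast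
  have ge: "\<And>i j. (\<lambda>y. g y $ i $ j) differentiable at x"
    using metric_entry_diff[OF m x, of "[]"] by simp
  have "(\<lambda>y. det (\<chi> i j. if j = k then axis l 1 $ i else g y $ i $ j) / det (g y)) differentiable at x"
  proof (intro differentiable_divide det_differentiable)
    fix i j
    show "(\<lambda>y. (\<chi> i j. if j = k then axis l 1 $ i else g y $ i $ j) $ i $ j) differentiable at x"
      using ge by (cases "j = k") simp_all
  next
    fix i j show "(\<lambda>y. g y $ i $ j) differentiable at x" by (rule ge)
  next
    show "det (g x) \<noteq> 0" using metric_invertible[OF m x] invertible_det_nz by blast
  qed
  then show ?thesis
    by (rule diff_local[OF U x, rotated]) (simp add: ginv_cramer[OF m])
qed

lemma christoffel_diff:
  assumes m: "riemannian_metric U g" and x: "x \<in> U"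
  shows "christoffel g k i j differentiable at x"
proof -
  have "(\<lambda>y. christoffel g k i j y) differentiable at x"
    unfolding christoffel_def
    using metric_entry_diff[OF m x, of "[_]"] ginv_diff[OF m x]
    by (intro differentiable_mult differentiable_const differentiable_sum ballI differentiable_add differentiable_diff) auto
  then show ?thesis by simp
qed

lemma metric_sym_pd:
  assumes m: "riemannian_metric U g" and x: "x \<in> U"
  shows "pd l (\<lambda>y. g y $ i $ j) x = pd l (\<lambda>y. g y $ j $ i) x"
  using m x unfolding riemannian_metric_def by (intro pd_local[of U]) auto

lemma christoffel_sym:
  assumes m: "riemannian_metric U g" and x: "x \<in> U"
  shows "christoffel g k i j x = christoffel g k j i x"
  unfolding christoffel_def using metric_sym_pd[OF m x] by (simp add: algebra_simps)

lemma christoffel_sym_pd: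
  assumes m: "riemannian_metric U g" and x: "x \<in> U"
  shows "pd l (christoffel g k i j) x = pd l (christoffel g k j i) x"
  using m x christoffel_sym[OF m] unfolding riemannian_metric_def by (intro pd_local[of U]) auto



lemmas dsimps = if_distrib[where f="\<lambda>x. x * _"] if_distrib[where f="\<lambda>x. _ * x"]

lemma ricci_algebra:
  fixes A P v :: "'n::finite \<Rightarrow> real" and a0 :: real
    and dP dV :: "'n \<Rightarrow> 'n \<Rightarrow> real" and G :: "'n \<Rightarrow> 'n \<Rightarrow> 'n \<Rightarrow> real"
    and dG :: "'n \<Rightarrow> 'n \<Rightarrow> 'n \<Rightarrow> 'n \<Rightarrow> real" and R :: "'n \<Rightarrow> real"
  assumes hV: "\<And>m k. dV m k = a0 * (if m = k then 1 else 0) + P m * v k - (\<Sum>j\<in>UNIV. G k m j * v j)"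
    and hG: "\<And>k i j. G k i j = G k j i"
    and hdG: "\<And>m k i j. dG m k i j = dG m k j i"
    and hP: "\<And>k i. dP k i - (\<Sum>m\<in>UNIV. G m k i * P m) = dP i k - (\<Sum>m\<in>UNIV. G m i k * P m)"
    and hS: "\<And>k. (if i = k then 1 else 0) * A k + (P i * dV k k + dP k i * v k)
                 - (\<Sum>j\<in>UNIV. G k i j * dV k j + dG k k i j * v j)
               = (if k = k then 1 else 0) * A i + (P k * dV i k + dP i k * v k)
                 - (\<Sum>j\<in>UNIV. G k k j * dV i j + dG i k k j * v j)"
    and hR: "\<And>j. R j = (\<Sum>k\<in>UNIV. dG k k j i) - (\<Sum>k\<in>UNIV. dG i k j k)
                 + (\<Sum>k\<in>UNIV. \<Sum>p\<in>UNIV. G k k p * G p j i - G k i p * G p j k)"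
  shows "(\<Sum>j\<in>UNIV. R j * v j) = (1 - real CARD('n)) * (A i - a0 * P i)"
proof -
  let ?n = "real CARD('n)"
  let ?pv = "\<Sum>k\<in>UNIV. P k * v k"
  let ?gv = "\<Sum>k\<in>UNIV. \<Sum>j\<in>UNIV. G k k j * v j"
  let ?X = "\<Sum>k\<in>UNIV. \<Sum>j\<in>UNIV. dG k k i j * v j - dG i k k j * v j"
  let ?Q = "\<Sum>j\<in>UNIV. \<Sum>k\<in>UNIV. \<Sum>p\<in>UNIV. (G k k p * G p j i - G k i p * G p j k) * v j"
  have p1: "(\<Sum>k\<in>UNIV. (if i = k then 1 else 0) * A k) = A i" by (simp add: dsimps cong: if_cong)
  have p2: "(\<Sum>k\<in>UNIV. P i * dV k k) = P i * (?n * a0 + ?pv - ?gv)"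
    by (simp add: hV sum_distrib_left sum_subtractf sum.distrib algebra_simps dsimps cong: if_cong)
  have p4: "(\<Sum>k\<in>UNIV. \<Sum>j\<in>UNIV. G k i j * dV k j)
     = a0 * (\<Sum>k\<in>UNIV. G k i k) + (\<Sum>k\<in>UNIV. \<Sum>j\<in>UNIV. G k i j * P k * v j)
       - (\<Sum>k\<in>UNIV. \<Sum>j\<in>UNIV. \<Sum>p\<in>UNIV. G k i j * G j k p * v p)"
    by (simp add: hV sum_distrib_left sum_subtractf sum.distrib algebra_simps dsimps cong: if_cong)
  have p6: "(\<Sum>k\<in>UNIV. P k * dV i k) = a0 * P i + P i * ?pv - (\<Sum>k\<in>UNIV. \<Sum>j\<in>UNIV. G k i j * P k * v j)"
    by (simp add: hV sum_distrib_left sum_subtractf sum.distrib algebra_simps dsimps cong: if_cong)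
  have p8: "(\<Sum>k\<in>UNIV. \<Sum>j\<in>UNIV. G k k j * dV i j)
     = a0 * (\<Sum>k\<in>UNIV. G k i k) + P i * ?gv
       - (\<Sum>k\<in>UNIV. \<Sum>j\<in>UNIV. \<Sum>p\<in>UNIV. G k k j * G j i p * v p)"
    by (simp add: hV sum_distrib_left sum_subtractf sum.distrib algebra_simps dsimps hG[of _ i] cong: if_cong)
  have hPs: "dP k i = dP i k" for k
  proof -
    have "(\<Sum>m\<in>UNIV. G m k i * P m) = (\<Sum>m\<in>UNIV. G m i k * P m)" using hG[of _ k i] by simp
    then show ?thesis using hP[of k i] by linarith
  qed
  have sS: "(\<Sum>k\<in>UNIV. (if i = k then 1 else 0) * A k + (P i * dV k k + dP k i * v k)
                 - (\<Sum>j\<in>UNIV. G k i j * dV k j + dG k k i j * v j))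
          = (\<Sum>k\<in>UNIV. (if k = k then 1 else 0) * A i + (P k * dV i k + dP i k * v k)
                 - (\<Sum>j\<in>UNIV. G k k j * dV i j + dG i k k j * v j))"
    using hS by simp
  then have sS2: "A i + (\<Sum>k\<in>UNIV. P i * dV k k) + (\<Sum>k\<in>UNIV. dP k i * v k)
      - (\<Sum>k\<in>UNIV. \<Sum>j\<in>UNIV. G k i j * dV k j) - (\<Sum>k\<in>UNIV. \<Sum>j\<in>UNIV. dG k k i j * v j)
    = ?n * A i + (\<Sum>k\<in>UNIV. P k * dV i k) + (\<Sum>k\<in>UNIV. dP i k * v k)
      - (\<Sum>k\<in>UNIV. \<Sum>j\<in>UNIV. G k k j * dV i j) - (\<Sum>k\<in>UNIV. \<Sum>j\<in>UNIV. dG i k k j * v j)"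
    by (simp add: sum.distrib sum_subtractf p1[symmetric])
  have Rs: "(\<Sum>j\<in>UNIV. R j * v j) = (\<Sum>k\<in>UNIV. \<Sum>j\<in>UNIV. dG k k i j * v j)
       - (\<Sum>k\<in>UNIV. \<Sum>j\<in>UNIV. dG i k k j * v j)
       + (\<Sum>j\<in>UNIV. \<Sum>k\<in>UNIV. \<Sum>p\<in>UNIV. G k k p * G p j i * v j)
       - (\<Sum>j\<in>UNIV. \<Sum>k\<in>UNIV. \<Sum>p\<in>UNIV. G k i p * G p j k * v j)"
  proof -
    have per: "R j * v j = (\<Sum>k\<in>UNIV. dG k k i j * v j) - (\<Sum>k\<in>UNIV. dG i k k j * v j)
       + (\<Sum>k\<in>UNIV. \<Sum>p\<in>UNIV. G k k p * G p j i * v j)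
       - (\<Sum>k\<in>UNIV. \<Sum>p\<in>UNIV. G k i p * G p j k * v j)" for j
    proof -
      have a: "(\<Sum>k\<in>UNIV. dG k k j i) = (\<Sum>k\<in>UNIV. dG k k i j)"
        by (intro sum.cong refl) (metis hdG)
      have b: "(\<Sum>k\<in>UNIV. dG i k j k) = (\<Sum>k\<in>UNIV. dG i k k j)"
        by (intro sum.cong refl) (metis hdG)
      show ?thesis unfolding hR a b
        by (simp add: left_diff_distrib distrib_right sum_distrib_right sum_subtractf)
    qed
    have "(\<Sum>j\<in>UNIV. R j * v j) = (\<Sum>j\<in>UNIV. \<Sum>k\<in>UNIV. dG k k i j * v j)
       - (\<Sum>j\<in>UNIV. \<Sum>k\<in>UNIV. dG i k k j * v j)
       + (\<Sum>j\<in>UNIV. \<Sum>k\<in>UNIV. \<Sum>p\<in>UNIV. G k k p * G p j i * v j)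
       - (\<Sum>j\<in>UNIV. \<Sum>k\<in>UNIV. \<Sum>p\<in>UNIV. G k i p * G p j k * v j)"
      unfolding per by (simp add: sum.distrib sum_subtractf)
    moreover have "(\<Sum>j\<in>UNIV. \<Sum>k\<in>UNIV. dG k k i j * v j) = (\<Sum>k\<in>UNIV. \<Sum>j\<in>UNIV. dG k k i j * v j)"
      by (rule sum.swap)
    moreover have "(\<Sum>j\<in>UNIV. \<Sum>k\<in>UNIV. dG i k k j * v j) = (\<Sum>k\<in>UNIV. \<Sum>j\<in>UNIV. dG i k k j * v j)"
      by (rule sum.swap)
    ultimately show ?thesis by simp
  qed
  have q1: "(\<Sum>j\<in>UNIV. \<Sum>k\<in>UNIV. \<Sum>p\<in>UNIV. G k k p * G p j i * v j)
         = (\<Sum>k\<in>UNIV. \<Sum>j\<in>UNIV. \<Sum>p\<in>UNIV. G k k j * G j i p * v p)"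
  proof -
    have "(\<Sum>j\<in>UNIV. \<Sum>k\<in>UNIV. \<Sum>p\<in>UNIV. G k k p * G p j i * v j)
        = (\<Sum>k\<in>UNIV. \<Sum>j\<in>UNIV. \<Sum>p\<in>UNIV. G k k p * G p j i * v j)"
      by (rule sum.swap)
    also have "\<dots> = (\<Sum>k\<in>UNIV. \<Sum>p\<in>UNIV. \<Sum>j\<in>UNIV. G k k p * G p j i * v j)"
      by (rule sum.cong[OF refl], rule sum.swap)
    also have "\<dots> = (\<Sum>k\<in>UNIV. \<Sum>j\<in>UNIV. \<Sum>p\<in>UNIV. G k k j * G j i p * v p)"
      by (simp add: hG[of _ _ i])
    finally show ?thesis .
  qed
  have q2: "(\<Sum>j\<in>UNIV. \<Sum>k\<in>UNIV. \<Sum>p\<in>UNIV. G k i p * G p j k * v j)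
         = (\<Sum>k\<in>UNIV. \<Sum>j\<in>UNIV. \<Sum>p\<in>UNIV. G k i j * G j k p * v p)"
  proof -
    have "(\<Sum>j\<in>UNIV. \<Sum>k\<in>UNIV. \<Sum>p\<in>UNIV. G k i p * G p j k * v j)
        = (\<Sum>k\<in>UNIV. \<Sum>j\<in>UNIV. \<Sum>p\<in>UNIV. G k i p * G p j k * v j)"
      by (rule sum.swap)
    also have "\<dots> = (\<Sum>k\<in>UNIV. \<Sum>p\<in>UNIV. \<Sum>j\<in>UNIV. G k i p * G p j k * v j)"
      by (rule sum.cong[OF refl], rule sum.swap)
    also have "\<dots> = (\<Sum>k\<in>UNIV. \<Sum>j\<in>UNIV. \<Sum>p\<in>UNIV. G k i j * G j k p * v p)"
      by (intro sum.cong refl) (metis hG)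
    finally show ?thesis .
  qed
  have gg: "(\<Sum>k\<in>UNIV. G k k i) = (\<Sum>k\<in>UNIV. G k i k)" using hG by simp
  have dd: "(\<Sum>k\<in>UNIV. dP k i * v k) = (\<Sum>k\<in>UNIV. dP i k * v k)" using hPs by simp
  have p2': "(\<Sum>k\<in>UNIV. P i * dV k k) = ?n * a0 * P i + P i * ?pv - P i * ?gv"
    using p2 by (simp add: algebra_simps)
  have fin: "(1 - ?n) * (A i - a0 * P i) = A i - ?n * A i - a0 * P i + ?n * a0 * P i"
    by (simp add: algebra_simps)
  show ?thesis
    unfolding fin using sS2 Rs q1 q2 p2' p4 p6 p8 dd by linarith
qed



lemma pd_T:
  assumes da: "a differentiable at x" and dpsi: "(\<lambda>y. \<psi> y $ i) differentiable at x"
    and dV: "\<And>j. (\<lambda>y. V y $ j) differentiable at x" and dG: "\<And>j. \<Gamma> j differentiable at x"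
  shows "pd m (\<lambda>y. a y * c + \<psi> y $ i * V y $ k - (\<Sum>j\<in>UNIV. \<Gamma> j y * V y $ j)) x
     = c * pd m a x + (\<psi> x $ i * pd m (\<lambda>y. V y $ k) x + pd m (\<lambda>y. \<psi> y $ i) x * V x $ k)
       - (\<Sum>j\<in>UNIV. \<Gamma> j x * pd m (\<lambda>y. V y $ j) x + pd m (\<Gamma> j) x * V x $ j)"
proof -
  have d1: "(\<lambda>y. a y * c) differentiable at x" using da by simp
  have d2: "(\<lambda>y. \<psi> y $ i * V y $ k) differentiable at x" using dpsi dV by simp
  have d3: "(\<lambda>y. \<Sum>j\<in>UNIV. \<Gamma> j y * V y $ j) differentiable at x"
    using dG dV by (intro differentiable_sum) auto
  have "pd m (\<lambda>y. a y * c + \<psi> y $ i * V y $ k - (\<Sum>j\<in>UNIV. \<Gamma> j y * V y $ j)) x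
     = pd m (\<lambda>y. a y * c) x + pd m (\<lambda>y. \<psi> y $ i * V y $ k) x - pd m (\<lambda>y. \<Sum>j\<in>UNIV. \<Gamma> j y * V y $ j) x"
    using d1 d2 d3 by (simp add: pd_diff pd_add)
  also have "pd m (\<lambda>y. a y * c) x = c * pd m a x"
    using pd_mult[OF da differentiable_const, of m c] by simp
  also have "pd m (\<lambda>y. \<psi> y $ i * V y $ k) x = \<psi> x $ i * pd m (\<lambda>y. V y $ k) x + pd m (\<lambda>y. \<psi> y $ i) x * V x $ k"
    using pd_mult[OF dpsi dV] by simp
  also have "pd m (\<lambda>y. \<Sum>j\<in>UNIV. \<Gamma> j y * V y $ j) x = (\<Sum>j\<in>UNIV. pd m (\<lambda>y. \<Gamma> j y * V y $ j) x)"
    using dG dV by (intro pd_sum) auto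
  also have "\<dots> = (\<Sum>j\<in>UNIV. \<Gamma> j x * pd m (\<lambda>y. V y $ j) x + pd m (\<Gamma> j) x * V x $ j)"
    using pd_mult[OF dG dV] by simp
  finally show ?thesis .
qed

lemma ricci_contract:
  fixes g :: "real^'n::finite \<Rightarrow> real^'n^'n"
  assumes m: "riemannian_metric U g" and sV: "smooth_field U V"
    and tf: "torse_forming U g V a \<psi>" and cod: "codazzi U g \<psi>" and x: "x \<in> U"
  shows "(\<Sum>j\<in>UNIV. ricci g j i x * V x $ j) = (1 - real CARD('n)) * (pd i a x - a x * \<psi> x $ i)"
proof -
  have U: "open U" using m unfolding riemannian_metric_def by blast
  have sa: "smooth_on U a" and spsi: "smooth_field U \<psi>"
    and tfe: "\<forall>y\<in>U. \<forall>i k. cov_vec g V i k y = a y * (if i = k then 1 else 0) + \<psi> y $ i * V y $ k"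
    using tf unfolding torse_forming_def by auto
  have da: "a differentiable at x" using smooth_diff[OF sa U x, of "[]"] by simp
  have dpsi: "(\<lambda>y. \<psi> y $ k) differentiable at x" for k
  proof -
    have "smooth_on U (\<lambda>y. \<psi> y $ k)" using spsi unfolding smooth_field_def by blast
    from smooth_diff[OF this U x, of "[]"] show ?thesis by simp
  qed
  have dVy: "pdl ls (\<lambda>y. V y $ k) differentiable at y" if "y \<in> U" for k ls y
  proof -
    have "smooth_on U (\<lambda>y. V y $ k)" using sV unfolding smooth_field_def by blast
    from smooth_diff[OF this U that] show ?thesis .
  qed
  have dV: "\<And>k. (\<lambda>y. V y $ k) differentiable at x" using dVy[OF x, where ls="[]"] by simp
  have dG: "\<And>k i j. christoffel g k i j differentiable at x" using christoffel_diff[OF m x] .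
  have E1: "pd i (\<lambda>y. V y $ k) y = a y * (if i = k then 1 else 0) + \<psi> y $ i * V y $ k
              - (\<Sum>j\<in>UNIV. christoffel g k i j y * V y $ j)" if "y \<in> U" for i k y
  proof -
    have "cov_vec g V i k y = a y * (if i = k then 1 else 0) + \<psi> y $ i * V y $ k" using tfe that by blast
    then show ?thesis unfolding cov_vec_def by linarith
  qed
  have hS: "(if i = k then 1 else 0) * pd k a x + (\<psi> x $ i * pd k (\<lambda>y. V y $ k) x + pd k (\<lambda>y. \<psi> y $ i) x * V x $ k)
       - (\<Sum>j\<in>UNIV. christoffel g k i j x * pd k (\<lambda>y. V y $ j) x + pd k (christoffel g k i j) x * V x $ j)
     = (if k = k then 1 else 0) * pd i a x + (\<psi> x $ k * pd i (\<lambda>y. V y $ k) x + pd i (\<lambda>y. \<psi> y $ k) x * V x $ k)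
       - (\<Sum>j\<in>UNIV. christoffel g k k j x * pd i (\<lambda>y. V y $ j) x + pd i (christoffel g k k j) x * V x $ j)"
    for k
  proof -
    have sym: "pd k (pd i (\<lambda>y. V y $ k)) x = pd i (pd k (\<lambda>y. V y $ k)) x"
    proof (rule mixed_partials[OF U x])
      show "\<forall>y\<in>U. (\<lambda>y. V y $ k) differentiable at y" using dVy[where ls="[]"] by simp
      show "\<forall>y\<in>U. pd i (\<lambda>y. V y $ k) differentiable at y" using dVy[where ls="[i]"] by simp
      show "\<forall>y\<in>U. pd k (\<lambda>y. V y $ k) differentiable at y" using dVy[where ls="[k]"] by simp
      show "isCont (pd k (pd i (\<lambda>y. V y $ k))) x"
        using dVy[OF x, where k=k and ls="[k, i]"] differentiable_imp_continuous_within by simp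
      show "isCont (pd i (pd k (\<lambda>y. V y $ k))) x"
        using dVy[OF x, where k=k and ls="[i, k]"] differentiable_imp_continuous_within by simp
    qed
    have l: "pd k (pd i (\<lambda>y. V y $ k)) x = pd k (\<lambda>y. a y * (if i = k then 1 else 0) + \<psi> y $ i * V y $ k
              - (\<Sum>j\<in>UNIV. christoffel g k i j y * V y $ j)) x"
      using E1 by (intro pd_local[OF U x]) auto
    have r: "pd i (pd k (\<lambda>y. V y $ k)) x = pd i (\<lambda>y. a y * (if k = k then 1 else 0) + \<psi> y $ k * V y $ k
              - (\<Sum>j\<in>UNIV. christoffel g k k j y * V y $ j)) x"
      using E1 by (intro pd_local[OF U x]) auto
    show ?thesis
      using sym unfolding l r pd_T[OF da dpsi dV dG] .
  qed
  show ?thesis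
  proof (rule ricci_algebra[where dV = "\<lambda>m k. pd m (\<lambda>y. V y $ k) x" and G = "\<lambda>k i j. christoffel g k i j x"
        and dG = "\<lambda>m k i j. pd m (christoffel g k i j) x" and dP = "\<lambda>m k. pd m (\<lambda>y. \<psi> y $ k) x"
        and A = "\<lambda>k. pd k a x" and P = "\<lambda>k. \<psi> x $ k"])
    show "\<And>m k. pd m (\<lambda>y. V y $ k) x = a x * (if m = k then 1 else 0) + \<psi> x $ m * V x $ k
                 - (\<Sum>j\<in>UNIV. christoffel g k m j x * V x $ j)"
      using E1[OF x] .
    show "\<And>k i j. christoffel g k i j x = christoffel g k j i x" using christoffel_sym[OF m x] .
    show "\<And>m k i j. pd m (christoffel g k i j) x = pd m (christoffel g k j i) x" using christoffel_sym_pd[OF m x] .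
    show "\<And>k i. pd k (\<lambda>y. \<psi> y $ i) x - (\<Sum>m\<in>UNIV. christoffel g m k i x * \<psi> x $ m)
             = pd i (\<lambda>y. \<psi> y $ k) x - (\<Sum>m\<in>UNIV. christoffel g m i k x * \<psi> x $ m)"
      using cod x unfolding codazzi_def cov_form_def by blast
    show "\<And>k. (if i = k then 1 else 0) * pd k a x + (\<psi> x $ i * pd k (\<lambda>y. V y $ k) x + pd k (\<lambda>y. \<psi> y $ i) x * V x $ k)
       - (\<Sum>j\<in>UNIV. christoffel g k i j x * pd k (\<lambda>y. V y $ j) x + pd k (christoffel g k i j) x * V x $ j)
     = (if k = k then 1 else 0) * pd i a x + (\<psi> x $ k * pd i (\<lambda>y. V y $ k) x + pd i (\<lambda>y. \<psi> y $ k) x * V x $ k)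
       - (\<Sum>j\<in>UNIV. christoffel g k k j x * pd i (\<lambda>y. V y $ j) x + pd i (christoffel g k k j) x * V x $ j)"
      using hS .
    show "\<And>j. ricci g j i x = (\<Sum>k\<in>UNIV. pd k (christoffel g k j i) x) - (\<Sum>k\<in>UNIV. pd i (christoffel g k j k) x)
                 + (\<Sum>k\<in>UNIV. \<Sum>p\<in>UNIV. christoffel g k k p x * christoffel g p j i x - christoffel g k i p x * christoffel g p j k x)"
      unfolding ricci_def ..
  qed
qed



lemma lower_christoffel:
  assumes m: "riemannian_metric U g" and x: "x \<in> U"
  shows "(\<Sum>k\<in>UNIV. g x $ j $ k * christoffel g k i m x)
     = (1/2) * (pd i (\<lambda>y. g y $ m $ j) x + pd m (\<lambda>y. g y $ i $ j) x - pd j (\<lambda>y. g y $ i $ m) x)"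
proof -
  let ?D = "\<lambda>l. pd i (\<lambda>y. g y $ m $ l) x + pd m (\<lambda>y. g y $ i $ l) x - pd l (\<lambda>y. g y $ i $ m) x"
  have "(\<Sum>k\<in>UNIV. g x $ j $ k * christoffel g k i m x)
      = (1/2) * (\<Sum>k\<in>UNIV. \<Sum>l\<in>UNIV. g x $ j $ k * ginv g x $ k $ l * ?D l)"
    unfolding christoffel_def by (simp add: sum_distrib_left sum_distrib_right mult_ac)
  also have "(\<Sum>k\<in>UNIV. \<Sum>l\<in>UNIV. g x $ j $ k * ginv g x $ k $ l * ?D l)
      = (\<Sum>l\<in>UNIV. (\<Sum>k\<in>UNIV. g x $ j $ k * ginv g x $ k $ l) * ?D l)"
    by (subst sum.swap) (simp add: sum_distrib_right)
  also have "\<dots> = ?D j"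
    by (simp add: ginv_sum1[OF m x] dsimps cong: if_cong)
  finally show ?thesis by simp
qed

lemma lie_formula:
  assumes m: "riemannian_metric U g" and x: "x \<in> U"
    and E1: "\<And>i k. pd i (\<lambda>y. V y $ k) x = a * (if i = k then 1 else 0) + \<psi> $ i * V x $ k
              - (\<Sum>j\<in>UNIV. christoffel g k i j x * V x $ j)"
  shows "lie_g V g i j x = 2 * a * g x $ i $ j + \<psi> $ i * (\<Sum>k\<in>UNIV. g x $ j $ k * V x $ k)
            + \<psi> $ j * (\<Sum>k\<in>UNIV. g x $ i $ k * V x $ k)"
proof -
  have gs: "\<And>i j. g x $ i $ j = g x $ j $ i" using m x unfolding riemannian_metric_def by blast
  have L: "(\<Sum>k\<in>UNIV. g x $ j $ k * pd i (\<lambda>y. V y $ k) x)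
     = a * g x $ i $ j + \<psi> $ i * (\<Sum>k\<in>UNIV. g x $ j $ k * V x $ k)
       - (\<Sum>p\<in>UNIV. V x $ p * (\<Sum>k\<in>UNIV. g x $ j $ k * christoffel g k i p x))" for i j
  proof -
    have "(\<Sum>k\<in>UNIV. g x $ j $ k * pd i (\<lambda>y. V y $ k) x)
      = (\<Sum>k\<in>UNIV. g x $ j $ k * a * (if i = k then 1 else 0)) + \<psi> $ i * (\<Sum>k\<in>UNIV. g x $ j $ k * V x $ k)
        - (\<Sum>k\<in>UNIV. \<Sum>p\<in>UNIV. V x $ p * (g x $ j $ k * christoffel g k i p x))"
      unfolding E1 by (simp add: algebra_simps sum.distrib sum_subtractf sum_distrib_left)
    also have "(\<Sum>k\<in>UNIV. \<Sum>p\<in>UNIV. V x $ p * (g x $ j $ k * christoffel g k i p x))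
       = (\<Sum>p\<in>UNIV. V x $ p * (\<Sum>k\<in>UNIV. g x $ j $ k * christoffel g k i p x))"
      by (subst sum.swap) (simp add: sum_distrib_left)
    also have "(\<Sum>k\<in>UNIV. g x $ j $ k * a * (if i = k then 1 else 0)) = a * g x $ i $ j"
      by (simp add: dsimps gs[of j i] cong: if_cong)
    finally show ?thesis .
  qed
  have L1: "(\<Sum>k\<in>UNIV. g x $ k $ j * pd i (\<lambda>y. V y $ k) x) = (\<Sum>k\<in>UNIV. g x $ j $ k * pd i (\<lambda>y. V y $ k) x)"
    using gs by simp
  have low: "(\<Sum>k\<in>UNIV. g x $ j $ k * christoffel g k i p x) + (\<Sum>k\<in>UNIV. g x $ i $ k * christoffel g k j p x)
      = pd p (\<lambda>y. g y $ i $ j) x" for p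
    unfolding lower_christoffel[OF m x] using metric_sym_pd[OF m x] by (simp add: algebra_simps)
  have "lie_g V g i j x = (\<Sum>k\<in>UNIV. V x $ k * pd k (\<lambda>y. g y $ i $ j) x)
      + (\<Sum>k\<in>UNIV. g x $ j $ k * pd i (\<lambda>y. V y $ k) x) + (\<Sum>k\<in>UNIV. g x $ i $ k * pd j (\<lambda>y. V y $ k) x)"
    unfolding lie_g_def sum.distrib L1 ..
  also have "\<dots> = 2 * a * g x $ i $ j + \<psi> $ i * (\<Sum>k\<in>UNIV. g x $ j $ k * V x $ k)
            + \<psi> $ j * (\<Sum>k\<in>UNIV. g x $ i $ k * V x $ k)
       + ((\<Sum>k\<in>UNIV. V x $ k * pd k (\<lambda>y. g y $ i $ j) x)
         - (\<Sum>p\<in>UNIV. V x $ p * ((\<Sum>k\<in>UNIV. g x $ j $ k * christoffel g k i p x) + (\<Sum>k\<in>UNIV. g x $ i $ k * christoffel g k j p x))))"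
    unfolding L by (simp add: algebra_simps sum.distrib gs[of j i])
  also have "(\<Sum>k\<in>UNIV. V x $ k * pd k (\<lambda>y. g y $ i $ j) x)
         - (\<Sum>p\<in>UNIV. V x $ p * ((\<Sum>k\<in>UNIV. g x $ j $ k * christoffel g k i p x) + (\<Sum>k\<in>UNIV. g x $ i $ k * christoffel g k j p x))) = 0"
    unfolding low by simp
  finally show ?thesis by simp
qed

lemma E1_of_tf:
  assumes "torse_forming U g V a \<psi>" "x \<in> U"
  shows "pd i (\<lambda>y. V y $ k) x = a x * (if i = k then 1 else 0) + \<psi> x $ i * V x $ k
              - (\<Sum>j\<in>UNIV. christoffel g k i j x * V x $ j)"
proof -
  have "cov_vec g V i k x = a x * (if i = k then 1 else 0) + \<psi> x $ i * V x $ k"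
    using assms unfolding torse_forming_def by blast
  then show ?thesis unfolding cov_vec_def by linarith
qed

lemma soliton_ricci:
  assumes m: "riemannian_metric U g" and x: "x \<in> U"
    and sol: "almost_einstein_soliton U g V lam" and tf: "torse_forming U g V a \<psi>"
  shows "ricci g i j x = (scal g x / 2 + lam x - a x) * g x $ i $ j
     - (1/2) * (\<psi> x $ i * (\<Sum>k\<in>UNIV. g x $ j $ k * V x $ k) + \<psi> x $ j * (\<Sum>k\<in>UNIV. g x $ i $ k * V x $ k))"
proof -
  have "(1/2) * lie_g V g i j x + ricci g i j x = (scal g x / 2 + lam x) * g x $ i $ j"
    using sol x unfolding almost_einstein_soliton_def by blast
  then show ?thesis
    unfolding lie_formula[OF m x E1_of_tf[OF tf x]] by (simp add: algebra_simps)
qed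

lemma scal_formula:
  fixes g :: "real^'n::finite \<Rightarrow> real^'n^'n"
  assumes m: "riemannian_metric U g" and x: "x \<in> U"
    and R: "\<And>i j. ricci g i j x = c * g x $ i $ j
     - (1/2) * (\<psi> $ i * (\<Sum>k\<in>UNIV. g x $ j $ k * V x $ k) + \<psi> $ j * (\<Sum>k\<in>UNIV. g x $ i $ k * V x $ k))"
  shows "scal g x = real CARD('n) * c - (\<Sum>i\<in>UNIV. \<psi> $ i * V x $ i)"
proof -
  have gs: "\<And>i j. g x $ i $ j = g x $ j $ i" using m x unfolding riemannian_metric_def by blast
  let ?H = "ginv g x"
  have t1: "(\<Sum>i\<in>UNIV. \<Sum>j\<in>UNIV. ?H $ i $ j * g x $ i $ j) = real CARD('n)"
  proof -
    have "(\<Sum>i\<in>UNIV. \<Sum>j\<in>UNIV. ?H $ i $ j * g x $ i $ j) = (\<Sum>i\<in>UNIV. \<Sum>j\<in>UNIV. ?H $ i $ j * g x $ j $ i)"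
      using gs by simp
    also have "\<dots> = (\<Sum>i\<in>(UNIV::'n set). 1)" by (simp add: ginv_sum1[OF m x])
    finally show ?thesis by simp
  qed
  have t2: "(\<Sum>i\<in>UNIV. \<Sum>j\<in>UNIV. ?H $ i $ j * (\<psi> $ i * (\<Sum>k\<in>UNIV. g x $ j $ k * V x $ k)))
        = (\<Sum>i\<in>UNIV. \<psi> $ i * V x $ i)"
  proof -
    have "(\<Sum>i\<in>UNIV. \<Sum>j\<in>UNIV. ?H $ i $ j * (\<psi> $ i * (\<Sum>k\<in>UNIV. g x $ j $ k * V x $ k)))
      = (\<Sum>i\<in>UNIV. \<psi> $ i * (\<Sum>j\<in>UNIV. \<Sum>k\<in>UNIV. ?H $ i $ j * g x $ j $ k * V x $ k))"
      by (simp add: sum_distrib_left mult_ac)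
    also have "\<dots> = (\<Sum>i\<in>UNIV. \<psi> $ i * (\<Sum>k\<in>UNIV. (\<Sum>j\<in>UNIV. ?H $ i $ j * g x $ j $ k) * V x $ k))"
    proof -
      have sw: "(\<Sum>j\<in>UNIV. \<Sum>k\<in>UNIV. ?H $ i $ j * g x $ j $ k * V x $ k) = (\<Sum>k\<in>UNIV. (\<Sum>j\<in>UNIV. ?H $ i $ j * g x $ j $ k) * V x $ k)" for i
        by (subst sum.swap) (simp add: sum_distrib_right)
      show ?thesis by (simp only: sw)
    qed
    also have "\<dots> = (\<Sum>i\<in>UNIV. \<psi> $ i * V x $ i)"
      by (simp add: ginv_sum1[OF m x] dsimps cong: if_cong)
    finally show ?thesis .
  qed
  have t3: "(\<Sum>i\<in>UNIV. \<Sum>j\<in>UNIV. ?H $ i $ j * (\<psi> $ j * (\<Sum>k\<in>UNIV. g x $ i $ k * V x $ k)))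
        = (\<Sum>i\<in>UNIV. \<psi> $ i * V x $ i)"
  proof -
    have "(\<Sum>i\<in>UNIV. \<Sum>j\<in>UNIV. ?H $ i $ j * (\<psi> $ j * (\<Sum>k\<in>UNIV. g x $ i $ k * V x $ k)))
      = (\<Sum>j\<in>UNIV. \<Sum>i\<in>UNIV. ?H $ i $ j * (\<psi> $ j * (\<Sum>k\<in>UNIV. g x $ i $ k * V x $ k)))"
      by (rule sum.swap)
    also have "\<dots> = (\<Sum>j\<in>UNIV. \<psi> $ j * (\<Sum>i\<in>UNIV. \<Sum>k\<in>UNIV. g x $ k $ i * ?H $ i $ j * V x $ k))"
      using gs by (simp add: sum_distrib_left mult_ac)
    also have "\<dots> = (\<Sum>j\<in>UNIV. \<psi> $ j * (\<Sum>k\<in>UNIV. (\<Sum>i\<in>UNIV. g x $ k $ i * ?H $ i $ j) * V x $ k))"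
    proof -
      have sw: "(\<Sum>i\<in>UNIV. \<Sum>k\<in>UNIV. g x $ k $ i * ?H $ i $ j * V x $ k) = (\<Sum>k\<in>UNIV. (\<Sum>i\<in>UNIV. g x $ k $ i * ?H $ i $ j) * V x $ k)" for j
        by (subst sum.swap) (simp add: sum_distrib_right)
      show ?thesis by (simp only: sw)
    qed
    also have "\<dots> = (\<Sum>i\<in>UNIV. \<psi> $ i * V x $ i)"
      by (simp add: ginv_sum1[OF m x] dsimps cong: if_cong)
    finally show ?thesis .
  qed
  have "scal g x = c * (\<Sum>i\<in>UNIV. \<Sum>j\<in>UNIV. ?H $ i $ j * g x $ i $ j)
     - (1/2) * ((\<Sum>i\<in>UNIV. \<Sum>j\<in>UNIV. ?H $ i $ j * (\<psi> $ i * (\<Sum>k\<in>UNIV. g x $ j $ k * V x $ k)))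
               + (\<Sum>i\<in>UNIV. \<Sum>j\<in>UNIV. ?H $ i $ j * (\<psi> $ j * (\<Sum>k\<in>UNIV. g x $ i $ k * V x $ k))))"
    unfolding scal_def R
    by (simp add: algebra_simps sum.distrib sum_subtractf sum_distrib_left)
  then show ?thesis unfolding t1 t2 t3 by simp
qed



lemma contract_R:
  fixes g :: "real^'n::finite \<Rightarrow> real^'n^'n"
  assumes gs: "\<And>i j. g x $ i $ j = g x $ j $ i"
    and R: "\<And>i j. ricci g i j x = c * g x $ i $ j
     - (1/2) * (\<psi> $ i * (\<Sum>k\<in>UNIV. g x $ j $ k * V x $ k) + \<psi> $ j * (\<Sum>k\<in>UNIV. g x $ i $ k * V x $ k))"
  shows "(\<Sum>i\<in>UNIV. V x $ i * (\<Sum>j\<in>UNIV. ricci g j i x * V x $ j))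
     = c * sqnorm g V x - (\<Sum>i\<in>UNIV. \<psi> $ i * V x $ i) * sqnorm g V x"
proof -
  define W where "W i = (\<Sum>k\<in>UNIV. g x $ i $ k * V x $ k)" for i
  define pv where "pv = (\<Sum>i\<in>UNIV. \<psi> $ i * V x $ i)"
  have WN: "(\<Sum>i\<in>UNIV. V x $ i * W i) = sqnorm g V x"
    unfolding W_def sqnorm_def by (simp add: sum_distrib_left mult_ac)
  have WN2: "(\<Sum>i\<in>UNIV. W i * V x $ i) = sqnorm g V x" using WN by (simp add: mult_ac)
  have gW: "(\<Sum>j\<in>UNIV. g x $ j $ i * V x $ j) = W i" for i
    unfolding W_def using gs by (simp add: mult_ac)
  have inner: "(\<Sum>j\<in>UNIV. ricci g j i x * V x $ j) = c * W i - (1/2) * (W i * pv + \<psi> $ i * sqnorm g V x)" for i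
  proof -
    have "(\<Sum>j\<in>UNIV. ricci g j i x * V x $ j)
       = c * (\<Sum>j\<in>UNIV. g x $ j $ i * V x $ j) - (1/2) * ((\<Sum>j\<in>UNIV. \<psi> $ j * V x $ j) * W i + \<psi> $ i * (\<Sum>j\<in>UNIV. W j * V x $ j))"
      unfolding R W_def[symmetric]
      by (simp add: algebra_simps sum_subtractf sum.distrib sum_distrib_left sum_distrib_right)
    then show ?thesis unfolding gW WN2 pv_def by (simp add: mult_ac)
  qed
  have "(\<Sum>i\<in>UNIV. V x $ i * (\<Sum>j\<in>UNIV. ricci g j i x * V x $ j))
      = c * (\<Sum>i\<in>UNIV. V x $ i * W i) - (1/2) * ((\<Sum>i\<in>UNIV. V x $ i * W i) * pv + (\<Sum>i\<in>UNIV. \<psi> $ i * V x $ i) * sqnorm g V x)"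
    unfolding inner by (simp add: algebra_simps sum_subtractf sum.distrib sum_distrib_left sum_distrib_right)
  then show ?thesis unfolding WN pv_def by simp
qed

lemma sqnorm_pos:
  assumes m: "riemannian_metric U g" and x: "x \<in> U" and v: "V x \<noteq> 0"
  shows "sqnorm g V x > 0"
  using assms unfolding riemannian_metric_def sqnorm_def by blast



lemma final_algebra:
  fixes n N c s lam a pv Va :: real
  assumes N: "N > 0" and e1: "s = n * c - pv" and e2: "c = s / 2 + lam - a"
    and e3: "(1 - n) * (Va - a * pv) = c * N - pv * N"
  shows "lam = a + (n - 1) * (n - 2) / (2 * N) * Va
            - 1 / (2 * N) * ((n - 1) * (n - 2) * a + (n - 3) * N) * pv"
proof -
  have h: "2 * c = n * c - pv + 2 * lam - 2 * a" using e1 e2 by linarith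
  have c2: "(2 - n) * c = 2 * (lam - a) - pv" using h by (simp add: left_diff_distrib right_diff_distrib)
  have "(2 - n) * ((1 - n) * (Va - a * pv)) = (2 - n) * (c * N - pv * N)"
    using e3 by simp
  also have "\<dots> = ((2 - n) * c) * N - (2 - n) * pv * N" by (simp add: algebra_simps)
  finally have "(2 - n) * ((1 - n) * (Va - a * pv)) = ((2 - n) * c) * N - (2 - n) * pv * N" .
  then have "2 * N * (lam - a) = (n - 1) * (n - 2) * (Va - a * pv) - (n - 3) * pv * N"
    unfolding c2 by (simp add: algebra_simps)
  then have K: "lam - a = ((n - 1) * (n - 2) * (Va - a * pv) - (n - 3) * pv * N) / (2 * N)"
    using N by (simp add: field_simps)
  have "a + (n - 1) * (n - 2) / (2 * N) * Va
            - 1 / (2 * N) * ((n - 1) * (n - 2) * a + (n - 3) * N) * pv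
        = a + ((n - 1) * (n - 2) * (Va - a * pv) - (n - 3) * pv * N) / (2 * N)"
    by (simp add: diff_divide_distrib add_divide_distrib algebra_simps)
  then show ?thesis using K by linarith
qed



lemma pdl_const: "\<exists>d. pdl ls (\<lambda>x::real^'n::finite. c) = (\<lambda>x. d)"
proof (induction ls)
  case Nil then show ?case by auto
next
  case (Cons i ls)
  then obtain d where eq: "pdl ls (\<lambda>x::real^'n. c) = (\<lambda>x. d)" by blast
  have "pdl (i # ls) (\<lambda>x::real^'n. c) = pd i (\<lambda>x. d)" using eq by simp
  also have "pd i (\<lambda>x::real^'n. d) = (\<lambda>x. 0)" by (simp add: fun_eq_iff)
  finally show ?case by blast
qed

lemma smooth_const: "smooth_on U (\<lambda>x. c)"
  unfolding smooth_on_def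
proof
  fix ls obtain d where "pdl ls (\<lambda>x::real^'a. c) = (\<lambda>x. d)" using pdl_const by blast
  then show "pdl ls (\<lambda>x. c) differentiable_on U" by simp
qed

theorem proposition3p1:
  fixes U :: "(real^'n::finite) set"
    and g :: "real^'n \<Rightarrow> real^'n^'n"
    and V :: "real^'n \<Rightarrow> real^'n"
    and lam :: "real^'n \<Rightarrow> real"
  assumes dim: "CARD('n) \<ge> 3"
    and metric: "riemannian_metric U g"
    and nonvanishing: "\<forall>x\<in>U. V x \<noteq> 0"
    and soliton: "almost_einstein_soliton U g V lam"
  shows "(\<forall>a \<psi>. torse_forming U g V a \<psi> \<and> codazzi U g \<psi> \<longrightarrow>
            (\<forall>x\<in>U. lam x = a x
               + (real CARD('n) - 1) * (real CARD('n) - 2) / (2 * sqnorm g V x) * dir_deriv V a x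
               - 1 / (2 * sqnorm g V x) * ((real CARD('n) - 1) * (real CARD('n) - 2) * a x
                    + (real CARD('n) - 3) * sqnorm g V x) * pair_form \<psi> V x))
       \<and> (\<forall>c::real. c \<noteq> 0 \<and> concircular U g V (\<lambda>x. c) \<longrightarrow>
            (\<forall>x\<in>U. lam x = c) \<and> (\<forall>x\<in>U. \<forall>i j. ricci g i j x = 0))"
proof -
  have sV: "smooth_field U V" using soliton unfolding almost_einstein_soliton_def by blast
  have gs: "\<And>x i j. x \<in> U \<Longrightarrow> g x $ i $ j = g x $ j $ i" using metric unfolding riemannian_metric_def by blast
  have contr: "(\<Sum>i\<in>UNIV. V x $ i * (\<Sum>j\<in>UNIV. ricci g j i x * V x $ j))
      = (1 - real CARD('n)) * (dir_deriv V a x - a x * pair_form \<psi> V x)"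
    if tf: "torse_forming U g V a \<psi>" and cod: "codazzi U g \<psi>" and x: "x \<in> U" for a \<psi> x
  proof -
    have "(\<Sum>i\<in>UNIV. V x $ i * (\<Sum>j\<in>UNIV. ricci g j i x * V x $ j))
       = (\<Sum>i\<in>UNIV. V x $ i * ((1 - real CARD('n)) * (pd i a x - a x * \<psi> x $ i)))"
      using ricci_contract[OF metric sV tf cod x] by simp
    also have "\<dots> = (\<Sum>i\<in>UNIV. (1 - real CARD('n)) * (V x $ i * pd i a x - a x * (\<psi> x $ i * V x $ i)))"
      by (intro sum.cong refl) (simp add: algebra_simps)
    also have "\<dots> = (1 - real CARD('n)) * (dir_deriv V a x - a x * pair_form \<psi> V x)"
      unfolding dir_deriv_def pair_form_def
      by (simp only: sum_distrib_left[symmetric] sum_subtractf)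
    finally show ?thesis .
  qed
  have part1: "lam x = a x
               + (real CARD('n) - 1) * (real CARD('n) - 2) / (2 * sqnorm g V x) * dir_deriv V a x
               - 1 / (2 * sqnorm g V x) * ((real CARD('n) - 1) * (real CARD('n) - 2) * a x
                    + (real CARD('n) - 3) * sqnorm g V x) * pair_form \<psi> V x"
    if tf: "torse_forming U g V a \<psi>" and cod: "codazzi U g \<psi>" and x: "x \<in> U" for a \<psi> x
  proof (rule final_algebra)
    let ?c = "scal g x / 2 + lam x - a x"
    have R: "\<And>i j. ricci g i j x = ?c * g x $ i $ j
     - (1/2) * (\<psi> x $ i * (\<Sum>k\<in>UNIV. g x $ j $ k * V x $ k) + \<psi> x $ j * (\<Sum>k\<in>UNIV. g x $ i $ k * V x $ k))"
      using soliton_ricci[OF metric x soliton tf] .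
    show "sqnorm g V x > 0" using sqnorm_pos[OF metric x] nonvanishing x by blast
    show "scal g x = real CARD('n) * ?c - pair_form \<psi> V x"
      using scal_formula[where \<psi>="\<psi> x" and V=V, OF metric x R] unfolding pair_form_def .
    show "?c = scal g x / 2 + lam x - a x" ..
    show "(1 - real CARD('n)) * (dir_deriv V a x - a x * pair_form \<psi> V x) = ?c * sqnorm g V x - pair_form \<psi> V x * sqnorm g V x"
      using contr[OF tf cod x] contract_R[where \<psi>="\<psi> x" and V=V, OF gs[OF x] R] unfolding pair_form_def by simp
  qed
  have part2: "(\<forall>x\<in>U. lam x = c) \<and> (\<forall>x\<in>U. \<forall>i j. ricci g i j x = 0)"
    if c: "c \<noteq> 0" and cc: "concircular U g V (\<lambda>x. c)" for c
  proof -
    have tf: "torse_forming U g V (\<lambda>x. c) (\<lambda>x. 0)"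
      using cc unfolding torse_forming_def concircular_def smooth_field_def
      by (simp add: smooth_const)
    have cod: "codazzi U g (\<lambda>x. 0)"
      unfolding codazzi_def cov_form_def by simp
    have dd: "dir_deriv V (\<lambda>x. c) x = 0" for x unfolding dir_deriv_def by simp
    have pf: "pair_form (\<lambda>x. 0) V x = 0" for x unfolding pair_form_def by simp
    have l: "\<forall>x\<in>U. lam x = c"
      using part1[OF tf cod] dd pf by simp
    have r: "ricci g i j x = 0" if x: "x \<in> U" for x i j
    proof -
      let ?c = "scal g x / 2 + lam x - c"
      have R: "\<And>i j. ricci g i j x = ?c * g x $ i $ j
       - (1/2) * ((0::real^'n) $ i * (\<Sum>k\<in>UNIV. g x $ j $ k * V x $ k) + (0::real^'n) $ j * (\<Sum>k\<in>UNIV. g x $ i $ k * V x $ k))"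
        using soliton_ricci[OF metric x soliton tf] by simp
      have "?c * sqnorm g V x = 0"
        using contr[OF tf cod x] contract_R[where \<psi>="0" and V=V, OF gs[OF x] R] dd pf unfolding pair_form_def by simp
      moreover have "sqnorm g V x > 0" using sqnorm_pos[OF metric x] nonvanishing x by blast
      ultimately have "?c = 0" by simp
      then show ?thesis using R by simp
    qed
    show ?thesis using l r by blast
  qed
  show ?thesis using part1 part2 by blast
qed


end
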